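(* Consider a source, a destination and $M \geq 1$ relays. Let $a_{sd}$ (source to destination), $a_{si}$ (source to relay $i$) and $a_{id}$ (relay $i$ to destination), $i=1,\dots,M$, be mutually independent circularly symmetric complex Gaussian $\mathcal{CN}(0,1)$ channel gains. Let the best relay $b$ be the index maximizing $\min\{|a_{si}|^2, |a_{id}|^2\}$ over $i \in \{1,\dots,M\}$, and write $a_{sb}, a_{bd}$ for its gains. Let $\rho > 0$ be the SNR, $r \in (0, 1/2)$ the multiplexing gain, and $R = r\log\rho$ the code rate. Under the (opportunistic) decode-and-forward protocol, an outage occurs as follows: if $\tfrac12\log(1+\rho|a_{sb}|^2) > R$ (the best relay decodes), outage is the event $\tfrac12\log\bigl(1+\rho(|a_{sd}|^2+|a_{bd}|^2)\bigr) \leq R$; otherwise outage is the event $\tfrac12\log(1+\rho|a_{sd}|^2) \leq R$. Let $P_e(\rho)$ be the outage probability. Then this protocol achieves the diversity-multiplexing tradeoff $d(r) = (M+1)(1-2r)$ for $r \in (0, 1/2)$, where $d(r) = -\lim_{\rho\to\infty} \frac{\log P_e(\rho)}{\log\rho}$.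
   Context: Setting: one source transmits in the first half of the time slots, all relays and the destination listen; only the selected best relay transmits in the second half (orthogonal time slots, half duplex), and the destination combines both copies. The nodes do not use channel knowledge at the physical layer. Relay selection rule: among all relays, the best relay is the one with the largest value of $\min\{|a_{si}|^2,|a_{id}|^2\}$. *)

theory Defs
  imports "HOL-Probability.Probability"
begin

datatype chan = SD | SR nat | RD nat

definition channels :: "nat \<Rightarrow> chan set" where
  "channels M = {SD} \<union> SR ` {1..M} \<union> RD ` {1..M}"

definition CN01_density :: "complex \<Rightarrow> real" where
  "CN01_density z = exp (- (cmod z)\<^sup>2) / pi"

text \<open>Best relay: an index in 1..M maximizing min(|a_si|^2, |a_id|^2); ties broken by least index.\<close>
definition best_relay :: "nat \<Rightarrow> (nat \<Rightarrow> complex) \<Rightarrow> (nat \<Rightarrow> complex) \<Rightarrow> nat" where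
  "best_relay M asr ard =
     (LEAST i. i \<in> {1..M} \<and>
        (\<forall>j\<in>{1..M}. min ((cmod (asr j))\<^sup>2) ((cmod (ard j))\<^sup>2)
                    \<le> min ((cmod (asr i))\<^sup>2) ((cmod (ard i))\<^sup>2)))"

definition df_outage :: "nat \<Rightarrow> real \<Rightarrow> real \<Rightarrow> (chan \<Rightarrow> complex) \<Rightarrow> bool" where
  "df_outage M \<rho> R a =
     (let b = best_relay M (\<lambda>i. a (SR i)) (\<lambda>i. a (RD i)) in
      if ln (1 + \<rho> * (cmod (a (SR b)))\<^sup>2) / 2 > R
      then ln (1 + \<rho> * ((cmod (a SD))\<^sup>2 + (cmod (a (RD b)))\<^sup>2)) / 2 \<le> R
      else ln (1 + \<rho> * (cmod (a SD))\<^sup>2) / 2 \<le> R)"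

end

theory Submission
  imports Defs "HOL-Real_Asymp.Real_Asymp"
begin


lemma lborel_sq: "emeasure lborel (cbox (Complex (-c) (-c)) (Complex c c)) = ennreal ((2 * c)^2)" if "c \<ge> 0" for c :: real
  using that by (simp add: emeasure_lborel_cbox_eq Basis_complex_def power2_eq_square ennreal_mult)

lemma cn_bounds:
  assumes "prob_space P" "distributed P lborel X (\<lambda>z. ennreal (CN01_density z))" "0 < s" "s \<le> 1"
  shows "s/6 \<le> measure P {\<omega>\<in>space P. (cmod (X \<omega>))\<^sup>2 \<le> s}"
    and "measure P {\<omega>\<in>space P. (cmod (X \<omega>))\<^sup>2 \<le> s} \<le> 2 * s"
proof -
  interpret prob_space P by fact
  define A where "A = {z::complex. (cmod z)\<^sup>2 \<le> s}"
  have Ab: "A \<in> sets borel" unfolding A_def by measurable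
  have eqs: "{\<omega>\<in>space P. (cmod (X \<omega>))\<^sup>2 \<le> s} = X -` A \<inter> space P" unfolding A_def by auto
  have em: "emeasure P (X -` A \<inter> space P) = (\<integral>\<^sup>+z. ennreal (CN01_density z) * indicator A z \<partial>lborel)"
    using distributed_emeasure[OF assms(2)] Ab by simp
  define c where "c = sqrt s"
  define d where "d = sqrt (s/2)"
  have c0: "c \<ge> 0" and d0: "d \<ge> 0" using assms by (auto simp: c_def d_def)
  have "(\<integral>\<^sup>+z. ennreal (CN01_density z) * indicator A z \<partial>lborel)
      \<le> (\<integral>\<^sup>+z. ennreal (1/pi) * indicator (cbox (Complex (-c) (-c)) (Complex c c)) z \<partial>lborel)"
  proof (rule nn_integral_mono)
    fix z :: complex
    show "ennreal (CN01_density z) * indicator A z \<le> ennreal (1/pi) * indicator (cbox (Complex (-c) (-c)) (Complex c c)) z"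
    proof (cases "z \<in> A")
      case True
      then have h: "(Re z)\<^sup>2 + (Im z)\<^sup>2 \<le> s" unfolding A_def by (simp add: cmod_power2)
      have "(Re z)\<^sup>2 \<le> s" using h zero_le_power2[of "Im z"] by linarith
      then have "\<bar>Re z\<bar> \<le> c" unfolding c_def
        by (intro real_le_rsqrt) simp
      have "(Im z)\<^sup>2 \<le> s" using h zero_le_power2[of "Re z"] by linarith
      then have "\<bar>Im z\<bar> \<le> c" unfolding c_def
        by (intro real_le_rsqrt) simp
      with \<open>\<bar>Re z\<bar> \<le> c\<close> have "z \<in> cbox (Complex (-c) (-c)) (Complex c c)"
        by (auto simp: cbox_complex_eq)
      moreover have "CN01_density z \<le> 1/pi" unfolding CN01_density_def
        by (simp add: divide_right_mono)
      ultimately show ?thesis using True by (simp add: ennreal_leI)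
    qed simp
  qed
  also have "\<dots> = ennreal (1/pi) * ennreal ((2 * c)^2)"
    by (subst nn_integral_cmult_indicator) (auto simp: lborel_sq c0)
  also have "\<dots> = ennreal (4 * s/pi)" using assms
    by (simp add: ennreal_mult[symmetric] c_def power_mult_distrib)
  finally have "ennreal (measure P (X -` A \<inter> space P)) \<le> ennreal (4 * s/pi)"
    using em by (simp add: emeasure_eq_measure)
  then have up: "measure P (X -` A \<inter> space P) \<le> 4 * s/pi"
    using assms by (subst (asm) ennreal_le_iff) auto
  have "4 * s/pi \<le> 2 * s" using pi_gt3 assms by (simp add: field_simps)
  then show "measure P {\<omega>\<in>space P. (cmod (X \<omega>))\<^sup>2 \<le> s} \<le> 2 * s"
    unfolding eqs using up by linarith
  have "ennreal (exp (-s)/pi) * ennreal ((2 * d)^2) =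
      (\<integral>\<^sup>+z. ennreal (exp (-s)/pi) * indicator (cbox (Complex (-d) (-d)) (Complex d d)) z \<partial>lborel)"
    by (subst nn_integral_cmult_indicator) (auto simp: lborel_sq d0)
  also have "\<dots> \<le> (\<integral>\<^sup>+z. ennreal (CN01_density z) * indicator A z \<partial>lborel)"
  proof (rule nn_integral_mono)
    fix z :: complex
    show "ennreal (exp (-s)/pi) * indicator (cbox (Complex (-d) (-d)) (Complex d d)) z \<le> ennreal (CN01_density z) * indicator A z"
    proof (cases "z \<in> cbox (Complex (-d) (-d)) (Complex d d)")
      case True
      then have "\<bar>Re z\<bar> \<le> d" "\<bar>Im z\<bar> \<le> d" by (auto simp: cbox_complex_eq)
      then have "(Re z)\<^sup>2 \<le> d\<^sup>2" "(Im z)\<^sup>2 \<le> d\<^sup>2"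
        using power_mono[of "\<bar>Re z\<bar>" d 2] power_mono[of "\<bar>Im z\<bar>" d 2] by simp_all
      moreover have "d\<^sup>2 = s/2" using assms by (simp add: d_def)
      ultimately have h: "(cmod z)\<^sup>2 \<le> s" by (simp add: cmod_power2)
      then have "z \<in> A" by (simp add: A_def)
      moreover have "exp (-s)/pi \<le> CN01_density z" unfolding CN01_density_def
        using h by (simp add: divide_right_mono)
      ultimately show ?thesis using True by (simp add: ennreal_leI)
    qed simp
  qed
  finally have lo0: "ennreal (exp (-s)/pi * (2 * s)) \<le> emeasure P (X -` A \<inter> space P)"
    using em assms by (simp add: ennreal_mult[symmetric] d_def power_mult_distrib)
  have lo: "exp (-s)/pi * (2 * s) \<le> measure P (X -` A \<inter> space P)"
    using lo0 by (simp add: emeasure_eq_measure)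
  have e1: "exp (-s) \<ge> 1/3"
  proof -
    have "exp (-1) \<le> exp (-s)" using assms by simp
    moreover have "exp (-1::real) = 1 / exp 1" by (simp add: exp_minus field_simps)
    moreover have "exp (1::real) \<le> 3" using exp_le by simp
    moreover have "1/3 \<le> 1 / exp (1::real)" using \<open>exp (1::real) \<le> 3\<close>
      by (intro divide_left_mono) auto
    ultimately show ?thesis by linarith
  qed
  have "s/6 \<le> exp (-s)/pi * (2 * s)"
  proof -
    have "s/6 = (1/3) / 4 * (2 * s)" by simp
    also have "\<dots> \<le> exp (-s)/4 * (2 * s)" using e1 assms by (intro mult_right_mono divide_right_mono) auto
    also have "\<dots> \<le> exp (-s)/pi * (2 * s)" using assms pi_less_4
      by (intro mult_right_mono divide_left_mono) auto
    finally show ?thesis .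
  qed
  then show "s/6 \<le> measure P {\<omega>\<in>space P. (cmod (X \<omega>))\<^sup>2 \<le> s}" using lo eqs by simp
qed


lemma best_relay_prop:
  assumes "M \<ge> 1"
  shows "best_relay M u v \<in> {1..M} \<and> (\<forall>j\<in>{1..M}. min ((cmod (u j))\<^sup>2) ((cmod (v j))\<^sup>2)
                    \<le> min ((cmod (u (best_relay M u v)))\<^sup>2) ((cmod (v (best_relay M u v)))\<^sup>2))"
proof -
  define g where "g j = min ((cmod (u j))\<^sup>2) ((cmod (v j))\<^sup>2)" for j
  have fin: "finite (g ` {1..M})" and ne: "g ` {1..M} \<noteq> {}" using assms by auto
  obtain k where k: "k \<in> {1..M}" "g k = Max (g ` {1..M})" using Max_in[OF fin ne] by auto
  have "\<forall>j\<in>{1..M}. g j \<le> g k" using k fin by auto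
  with k have ex: "\<exists>i. i \<in> {1..M} \<and> (\<forall>j\<in>{1..M}. g j \<le> g i)" by blast
  show ?thesis unfolding best_relay_def g_def[symmetric] by (rule LeastI_ex[OF ex])
qed

lemma best_relay_cong:
  assumes "\<And>i. i \<in> {1..M} \<Longrightarrow> u i = u' i" "\<And>i. i \<in> {1..M} \<Longrightarrow> v i = v' i"
  shows "best_relay M u v = best_relay M u' v'"
  unfolding best_relay_def
  by (rule arg_cong[where f = Least]) (auto simp: assms fun_eq_iff)

lemma df_outage_cong:
  assumes "M \<ge> 1" "\<And>c. c \<in> channels M \<Longrightarrow> f c = f' c"
  shows "df_outage M \<rho> R f = df_outage M \<rho> R f'"
proof -
  have b: "best_relay M (\<lambda>i. f (SR i)) (\<lambda>i. f (RD i)) = best_relay M (\<lambda>i. f' (SR i)) (\<lambda>i. f' (RD i))"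
    by (rule best_relay_cong) (auto simp: assms channels_def)
  have "best_relay M (\<lambda>i. f (SR i)) (\<lambda>i. f (RD i)) \<in> {1..M}" using best_relay_prop[OF assms(1)] by blast
  then show ?thesis unfolding df_outage_def Let_def b[symmetric]
    by (simp add: assms(2) channels_def)
qed

lemma thresh:
  fixes \<rho> x r :: real
  assumes "\<rho> > 1" "x \<ge> 0"
  shows "(ln (1 + \<rho> * x) / 2 \<le> r * ln \<rho>) \<longleftrightarrow> x \<le> (\<rho> powr (2*r) - 1) / \<rho>"
proof -
  have "(ln (1 + \<rho> * x) / 2 \<le> r * ln \<rho>) \<longleftrightarrow> ln (1 + \<rho> * x) \<le> ln (\<rho> powr (2*r))"
    using assms by (simp add: ln_powr mult_ac)
  also have "\<dots> \<longleftrightarrow> 1 + \<rho> * x \<le> \<rho> powr (2*r)"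
    using assms by (intro ln_le_cancel_iff) (auto intro: add_pos_nonneg)
  also have "\<dots> \<longleftrightarrow> x \<le> (\<rho> powr (2*r) - 1) / \<rho>"
    using assms by (simp add: field_simps)
  finally show ?thesis .
qed

lemma outage_meas:
  assumes [measurable]: "\<And>c. f c \<in> borel_measurable P"
  shows "{\<omega>\<in>space P. df_outage M \<rho> R (\<lambda>c. f c \<omega>)} \<in> sets P"
proof -
  have [measurable]: "(\<lambda>\<omega>. best_relay M (\<lambda>i. f (SR i) \<omega>) (\<lambda>i. f (RD i) \<omega>)) \<in> measurable P (count_space UNIV)"
    unfolding best_relay_def by measurable
  show ?thesis unfolding df_outage_def Let_def by measurable
qed


lemma bounds_main:
  fixes P :: "'w measure" and a :: "chan \<Rightarrow> 'w \<Rightarrow> complex"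
    and M :: nat and r :: real and Pe :: "real \<Rightarrow> real"
  assumes "prob_space P"
    and "M \<ge> 1"
    and "prob_space.indep_vars P (\<lambda>_. borel) a (channels M)"
    and "\<forall>c\<in>channels M. distributed P lborel (a c) (\<lambda>z. ennreal (CN01_density z))"
    and "\<forall>\<rho>>0. Pe \<rho> = measure P {\<omega> \<in> space P. df_outage M \<rho> (r * ln \<rho>) (\<lambda>c. a c \<omega>)}"
    and rho: "\<rho> > 1" and t1: "(\<rho> powr (2*r) - 1) / \<rho> \<le> 1" and t0: "0 < (\<rho> powr (2*r) - 1) / \<rho>"
  shows "((\<rho> powr (2*r) - 1) / \<rho> / 6) ^ (M+1) \<le> Pe \<rho> \<and> Pe \<rho> \<le> 2^M * (2 * ((\<rho> powr (2*r) - 1) / \<rho>)) ^ (M+1)"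
proof -
  interpret prob_space P by fact
  define t where "t = (\<rho> powr (2*r) - 1) / \<rho>"
  have t0': "0 < t" "t \<le> 1" using t0 t1 by (auto simp: t_def)
  have rv: "\<And>c. c \<in> channels M \<Longrightarrow> a c \<in> borel_measurable P"
    using assms(3) unfolding indep_vars_def by auto
  have indep: "indep_sets (\<lambda>c. {a c -` A \<inter> space P | A. A \<in> sets borel}) (channels M)"
    using assms(3) unfolding indep_vars_def
    by (auto elim!: indep_sets_mono_sets intro: sigma_sets.Basic)
  define E where "E c = {\<omega>\<in>space P. (cmod (a c \<omega>))\<^sup>2 \<le> t}" for c
  have E_alt: "E c = a c -` {z. (cmod z)\<^sup>2 \<le> t} \<inter> space P" for c unfolding E_def by auto
  have Eb: "{z::complex. (cmod z)\<^sup>2 \<le> t} \<in> sets borel" by measurable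
  have Ev: "E c \<in> events" if "c \<in> channels M" for c
    unfolding E_def using rv[OF that] by measurable
  have prodE: "prob (\<Inter>c\<in>J. E c) = (\<Prod>c\<in>J. prob (E c))"
    if "J \<subseteq> channels M" "finite J" "J \<noteq> {}" for J
  proof -
    have "\<forall>A\<in>Pi J (\<lambda>c. {a c -` A \<inter> space P | A. A \<in> sets borel}). prob (\<Inter>j\<in>J. A j) = (\<Prod>j\<in>J. prob (A j))"
      using indep that unfolding indep_sets_def by blast
    moreover have "E \<in> Pi J (\<lambda>c. {a c -` A \<inter> space P | A. A \<in> sets borel})"
      using Eb unfolding E_alt Pi_def by blast
    ultimately show ?thesis by blast
  qed
  have pb: "t/6 \<le> prob (E c) \<and> prob (E c) \<le> 2 * t" if "c \<in> channels M" for c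
    using cn_bounds[OF assms(1) _ t0'] assms(4) that unfolding E_def by blast
  have chSD: "SD \<in> channels M" and chSR: "\<And>i. i \<in> {1..M} \<Longrightarrow> SR i \<in> channels M"
    and chRD: "\<And>i. i \<in> {1..M} \<Longrightarrow> RD i \<in> channels M" by (auto simp: channels_def)
  define Out where "Out = {\<omega> \<in> space P. df_outage M \<rho> (r * ln \<rho>) (\<lambda>c. a c \<omega>)}"
  have Pe_eq: "Pe \<rho> = prob Out" using assms(5) rho unfolding Out_def by auto
  define a' where "a' c = (if c \<in> channels M then a c else (\<lambda>_. 0))" for c
  have a'm: "a' c \<in> borel_measurable P" for c unfolding a'_def using rv by auto
  have "Out = {\<omega> \<in> space P. df_outage M \<rho> (r * ln \<rho>) (\<lambda>c. a' c \<omega>)}"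
    unfolding Out_def using df_outage_cong[OF assms(2), of "\<lambda>c. a c _" "\<lambda>c. a' c _"]
    by (auto simp: a'_def)
  then have Out_ev: "Out \<in> events" using outage_meas[OF a'm] by simp
  have th: "\<And>x. x \<ge> 0 \<Longrightarrow> (ln (1 + \<rho> * x) / 2 \<le> r * ln \<rho>) \<longleftrightarrow> x \<le> t"
    unfolding t_def using thresh rho by blast
  define JL where "JL = insert SD (SR ` {1..M})"
  have JLsub: "JL \<subseteq> channels M" using chSD chSR by (auto simp: JL_def)
  have JLcard: "card JL = M + 1"
  proof -
    have "card (SR ` {1..M}) = M" by (subst card_image) (auto simp: inj_on_def)
    then show ?thesis unfolding JL_def by (subst card_insert_disjoint) auto
  qed
  have fJL: "finite JL" "JL \<noteq> {}" by (auto simp: JL_def)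
  have Lsub: "(\<Inter>c\<in>JL. E c) \<subseteq> Out"
  proof
    fix \<omega> assume w: "\<omega> \<in> (\<Inter>c\<in>JL. E c)"
    then have sp: "\<omega> \<in> space P" unfolding JL_def E_def by auto
    have X: "(cmod (a SD \<omega>))\<^sup>2 \<le> t" using w unfolding JL_def E_def by auto
    have U: "\<And>i. i \<in> {1..M} \<Longrightarrow> (cmod (a (SR i) \<omega>))\<^sup>2 \<le> t" using w unfolding JL_def E_def by auto
    define b where "b = best_relay M (\<lambda>i. a (SR i) \<omega>) (\<lambda>i. a (RD i) \<omega>)"
    have "b \<in> {1..M}" using best_relay_prop[OF assms(2)] unfolding b_def by blast
    then have "(cmod (a (SR b) \<omega>))\<^sup>2 \<le> t" using U by blast
    then have "ln (1 + \<rho> * (cmod (a (SR b) \<omega>))\<^sup>2) / 2 \<le> r * ln \<rho>"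
      using th[of "(cmod (a (SR b) \<omega>))\<^sup>2"] by simp
    then have "\<not> (ln (1 + \<rho> * (cmod (a (SR b) \<omega>))\<^sup>2) / 2 > r * ln \<rho>)" by linarith
    moreover have "ln (1 + \<rho> * (cmod (a SD \<omega>))\<^sup>2) / 2 \<le> r * ln \<rho>" using th X by simp
    ultimately show "\<omega> \<in> Out" unfolding Out_def df_outage_def Let_def using sp by (simp add: b_def)
  qed
  have "(t/6) ^ (M+1) = (\<Prod>c\<in>JL. t/6)" using JLcard by simp
  also have "\<dots> \<le> (\<Prod>c\<in>JL. prob (E c))"
    by (rule prod_mono) (use pb JLsub t0' in auto)
  also have "\<dots> = prob (\<Inter>c\<in>JL. E c)" using prodE[OF JLsub fJL] by simp
  also have "\<dots> \<le> prob Out" using Lsub Out_ev by (rule finite_measure_mono)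
  finally have low: "(t/6) ^ (M+1) \<le> Pe \<rho>" using Pe_eq by simp
  define J where "J S = insert SD (SR ` S \<union> RD ` ({1..M} - S))" for S
  have Jsub: "J S \<subseteq> channels M" if "S \<subseteq> {1..M}" for S using that chSD chSR chRD by (auto simp: J_def)
  have fJ: "finite (J S)" "J S \<noteq> {}" if "S \<subseteq> {1..M}" for S using that finite_subset by (auto simp: J_def)
  have Jcard: "card (J S) = M + 1" if "S \<subseteq> {1..M}" for S
  proof -
    have fS: "finite S" using that finite_subset by blast
    have c1: "card (SR ` S) = card S" by (subst card_image) (auto simp: inj_on_def)
    have c2: "card (RD ` ({1..M} - S)) = M - card S" using that
      by (subst card_image) (auto simp: inj_on_def card_Diff_subset fS)
    have "card (SR ` S \<union> RD ` ({1..M} - S)) = card S + (M - card S)"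
      using c1 c2 fS by (subst card_Un_disjoint) auto
    moreover have "card S \<le> M" using that card_mono[of "{1..M}" S] by auto
    ultimately show ?thesis unfolding J_def by (subst card_insert_disjoint) (auto simp: fS)
  qed
  have Usub: "Out \<subseteq> (\<Union>S\<in>Pow {1..M}. \<Inter>c\<in>J S. E c)"
  proof
    fix \<omega> assume w: "\<omega> \<in> Out"
    then have sp: "\<omega> \<in> space P" unfolding Out_def by auto
    define b where "b = best_relay M (\<lambda>i. a (SR i) \<omega>) (\<lambda>i. a (RD i) \<omega>)"
    have bp: "\<forall>j\<in>{1..M}. min ((cmod (a (SR j) \<omega>))\<^sup>2) ((cmod (a (RD j) \<omega>))\<^sup>2)
                    \<le> min ((cmod (a (SR b) \<omega>))\<^sup>2) ((cmod (a (RD b) \<omega>))\<^sup>2)"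
      using best_relay_prop[OF assms(2), of "\<lambda>i. a (SR i) \<omega>" "\<lambda>i. a (RD i) \<omega>"] unfolding b_def by simp
    have out: "if ln (1 + \<rho> * (cmod (a (SR b) \<omega>))\<^sup>2) / 2 > r * ln \<rho>
      then ln (1 + \<rho> * ((cmod (a SD \<omega>))\<^sup>2 + (cmod (a (RD b) \<omega>))\<^sup>2)) / 2 \<le> r * ln \<rho>
      else ln (1 + \<rho> * (cmod (a SD \<omega>))\<^sup>2) / 2 \<le> r * ln \<rho>"
      using w unfolding Out_def df_outage_def Let_def b_def by blast
    have XM: "(cmod (a SD \<omega>))\<^sup>2 \<le> t \<and> min ((cmod (a (SR b) \<omega>))\<^sup>2) ((cmod (a (RD b) \<omega>))\<^sup>2) \<le> t"
    proof (cases "ln (1 + \<rho> * (cmod (a (SR b) \<omega>))\<^sup>2) / 2 > r * ln \<rho>")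
      case True
      then have "ln (1 + \<rho> * ((cmod (a SD \<omega>))\<^sup>2 + (cmod (a (RD b) \<omega>))\<^sup>2)) / 2 \<le> r * ln \<rho>"
        using out by simp
      then have "(cmod (a SD \<omega>))\<^sup>2 + (cmod (a (RD b) \<omega>))\<^sup>2 \<le> t"
        using th[of "(cmod (a SD \<omega>))\<^sup>2 + (cmod (a (RD b) \<omega>))\<^sup>2"] by simp
      then show ?thesis by (smt (verit) zero_le_power2)
    next
      case False
      then have "ln (1 + \<rho> * (cmod (a (SR b) \<omega>))\<^sup>2) / 2 \<le> r * ln \<rho>" by linarith
      then have "(cmod (a (SR b) \<omega>))\<^sup>2 \<le> t" using th[of "(cmod (a (SR b) \<omega>))\<^sup>2"] by simp
      moreover have "ln (1 + \<rho> * (cmod (a SD \<omega>))\<^sup>2) / 2 \<le> r * ln \<rho>" using out False by simp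
      then have "(cmod (a SD \<omega>))\<^sup>2 \<le> t" using th[of "(cmod (a SD \<omega>))\<^sup>2"] by simp
      ultimately show ?thesis by simp
    qed
    define S where "S = {i\<in>{1..M}. (cmod (a (SR i) \<omega>))\<^sup>2 \<le> t}"
    have "\<omega> \<in> (\<Inter>c\<in>J S. E c)"
    proof -
      have "\<omega> \<in> E (RD i)" if "i \<in> {1..M} - S" for i
      proof -
        have "min ((cmod (a (SR i) \<omega>))\<^sup>2) ((cmod (a (RD i) \<omega>))\<^sup>2) \<le> t" using bp XM that by force
        then show ?thesis using that sp unfolding S_def E_def by auto
      qed
      moreover have "\<omega> \<in> E (SR i)" if "i \<in> S" for i using that sp unfolding S_def E_def by auto
      moreover have "\<omega> \<in> E SD" using XM sp unfolding E_def by auto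
      ultimately show ?thesis unfolding J_def by blast
    qed
    moreover have "S \<in> Pow {1..M}" unfolding S_def by auto
    ultimately show "\<omega> \<in> (\<Union>S\<in>Pow {1..M}. \<Inter>c\<in>J S. E c)" by blast
  qed
  have Bev: "(\<lambda>S. \<Inter>c\<in>J S. E c) ` Pow {1..M} \<subseteq> events"
  proof
    fix B assume "B \<in> (\<lambda>S. \<Inter>c\<in>J S. E c) ` Pow {1..M}"
    then obtain S where S: "S \<subseteq> {1..M}" "B = (\<Inter>c\<in>J S. E c)" by auto
    show "B \<in> events" unfolding S(2)
      by (rule sets.finite_INT) (use fJ[OF S(1)] Ev Jsub[OF S(1)] in auto)
  qed
  have "prob Out \<le> prob (\<Union>S\<in>Pow {1..M}. \<Inter>c\<in>J S. E c)"
    by (rule finite_measure_mono[OF Usub]) (use Bev in auto)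
  also have "\<dots> \<le> (\<Sum>S\<in>Pow {1..M}. prob (\<Inter>c\<in>J S. E c))"
    by (rule finite_measure_subadditive_finite) (use Bev in auto)
  also have "\<dots> \<le> (\<Sum>S\<in>Pow {1..M}. (2 * t) ^ (M+1))"
  proof (rule sum_mono)
    fix S assume S: "S \<in> Pow {1..M}"
    then have S': "S \<subseteq> {1..M}" by auto
    have "prob (\<Inter>c\<in>J S. E c) = (\<Prod>c\<in>J S. prob (E c))" using prodE[OF Jsub[OF S'] fJ[OF S']] .
    also have "\<dots> \<le> (\<Prod>c\<in>J S. 2 * t)"
      by (rule prod_mono) (use pb Jsub[OF S'] in auto)
    also have "\<dots> = (2 * t) ^ (M+1)" using Jcard[OF S'] by simp
    finally show "prob (\<Inter>c\<in>J S. E c) \<le> (2 * t) ^ (M+1)" .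
  qed
  also have "\<dots> = 2^M * (2 * t) ^ (M+1)" by (simp add: card_Pow)
  finally have up: "Pe \<rho> \<le> 2^M * (2 * t) ^ (M+1)" using Pe_eq by simp
  show ?thesis using low up unfolding t_def by simp
qed


lemma lim_aux:
  assumes "0 < r" "r < 1/2"
  shows "((\<lambda>\<rho>::real. ln ((\<rho> powr (2*r) - 1)/\<rho> / 6) / ln \<rho>) \<longlongrightarrow> 2*r - 1) at_top"
    and "((\<lambda>\<rho>::real. ln (2 * ((\<rho> powr (2*r) - 1)/\<rho>)) / ln \<rho>) \<longlongrightarrow> 2*r - 1) at_top"
    and "eventually (\<lambda>\<rho>::real. 1 < \<rho> \<and> 0 < (\<rho> powr (2*r) - 1)/\<rho> \<and> (\<rho> powr (2*r) - 1)/\<rho> \<le> 1) at_top"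
    and "((\<lambda>\<rho>::real. 1 / ln \<rho>) \<longlongrightarrow> 0) at_top"
proof -
  show "((\<lambda>\<rho>::real. ln ((\<rho> powr (2*r) - 1)/\<rho> / 6) / ln \<rho>) \<longlongrightarrow> 2*r - 1) at_top"
    using assms by real_asymp
  show "((\<lambda>\<rho>::real. ln (2 * ((\<rho> powr (2*r) - 1)/\<rho>)) / ln \<rho>) \<longlongrightarrow> 2*r - 1) at_top"
    using assms by real_asymp
  show "((\<lambda>\<rho>::real. 1 / ln \<rho>) \<longlongrightarrow> 0) at_top" by real_asymp
  have e1: "eventually (\<lambda>\<rho>::real. 1 < \<rho>) at_top" by real_asymp
  have e2: "eventually (\<lambda>\<rho>::real. 0 < (\<rho> powr (2*r) - 1)/\<rho>) at_top" using assms by real_asymp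
  have e3: "eventually (\<lambda>\<rho>::real. (\<rho> powr (2*r) - 1)/\<rho> \<le> 1) at_top" using assms by real_asymp
  show "eventually (\<lambda>\<rho>::real. 1 < \<rho> \<and> 0 < (\<rho> powr (2*r) - 1)/\<rho> \<and> (\<rho> powr (2*r) - 1)/\<rho> \<le> 1) at_top"
    using e1 e2 e3 by eventually_elim auto
qed

theorem theorem3:
  fixes P :: "'w measure" and a :: "chan \<Rightarrow> 'w \<Rightarrow> complex"
    and M :: nat and r :: real and Pe :: "real \<Rightarrow> real"
  assumes "prob_space P"
    and "M \<ge> 1"
    and "prob_space.indep_vars P (\<lambda>_. borel) a (channels M)"
    and "\<forall>c\<in>channels M. distributed P lborel (a c) (\<lambda>z. ennreal (CN01_density z))"
    and "0 < r" and "r < 1/2"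
    and "\<forall>\<rho>>0. Pe \<rho> = measure P {\<omega> \<in> space P. df_outage M \<rho> (r * ln \<rho>) (\<lambda>c. a c \<omega>)}"
  shows "((\<lambda>\<rho>. - ln (Pe \<rho>) / ln \<rho>) \<longlongrightarrow> real (M + 1) * (1 - 2 * r)) at_top"
proof -
  define t where "t \<rho> = (\<rho> powr (2*r) - 1) / \<rho>" for \<rho> :: real
  define lo where "lo \<rho> = - (real M * ln 2 + real (M+1) * ln (2 * t \<rho>)) / ln \<rho>" for \<rho>
  define hi where "hi \<rho> = - (real (M+1) * ln (t \<rho> / 6)) / ln \<rho>" for \<rho>
  note L = lim_aux[OF assms(5,6), folded t_def]
  have ev: "eventually (\<lambda>\<rho>. lo \<rho> \<le> - ln (Pe \<rho>) / ln \<rho> \<and> - ln (Pe \<rho>) / ln \<rho> \<le> hi \<rho>) at_top"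
    using L(3)
  proof eventually_elim
    case (elim \<rho>)
    then have r1: "1 < \<rho>" and t0: "0 < t \<rho>" and t1: "t \<rho> \<le> 1" by auto
    have B: "(t \<rho> / 6) ^ (M+1) \<le> Pe \<rho> \<and> Pe \<rho> \<le> 2^M * (2 * t \<rho>) ^ (M+1)"
      using bounds_main[OF assms(1-4) assms(7) r1] t0 t1 unfolding t_def by blast
    have pos: "0 < (t \<rho> / 6) ^ (M+1)" using t0 by simp
    have lnp: "0 < ln \<rho>" using r1 by simp
    have "real (M+1) * ln (t \<rho> / 6) = ln ((t \<rho> / 6) ^ (M+1))" using ln_realpow[of "t \<rho> / 6" "M+1"] t0 by (simp only:)
    also have "\<dots> \<le> ln (Pe \<rho>)" using B pos by (subst ln_le_cancel_iff) auto
    finally have A1: "real (M+1) * ln (t \<rho> / 6) \<le> ln (Pe \<rho>)" .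
    have Pp: "0 < Pe \<rho>" using B pos by linarith
    have hp: "0 < 2^M * (2 * t \<rho>) ^ (M+1)" using t0 by simp
    have "ln (Pe \<rho>) \<le> ln (2^M * (2 * t \<rho>) ^ (M+1))" using ln_le_cancel_iff[OF Pp hp] B by blast
    also have "\<dots> = real M * ln 2 + real (M+1) * ln (2 * t \<rho>)" using t0 by (simp add: ln_mult ln_realpow algebra_simps)
    finally have A2: "ln (Pe \<rho>) \<le> real M * ln 2 + real (M+1) * ln (2 * t \<rho>)" .
    have "lo \<rho> \<le> - ln (Pe \<rho>) / ln \<rho>" unfolding lo_def using A2 lnp by (intro divide_right_mono) auto
    moreover have "- ln (Pe \<rho>) / ln \<rho> \<le> hi \<rho>" unfolding hi_def using A1 lnp by (intro divide_right_mono) auto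
    ultimately show ?case by blast
  qed
  have lo_eq: "lo = (\<lambda>\<rho>. - (real M * ln 2) * (1 / ln \<rho>) - real (M+1) * (ln (2 * t \<rho>) / ln \<rho>))"
    unfolding lo_def
  proof (rule ext)
    fix \<rho> :: real
    show "- (real M * ln 2 + real (M + 1) * ln (2 * t \<rho>)) / ln \<rho> =
      - (real M * ln 2) * (1 / ln \<rho>) - real (M + 1) * (ln (2 * t \<rho>) / ln \<rho>)"
      by (cases "ln \<rho> = 0") (simp_all add: field_simps)
  qed
  have hi_eq: "hi = (\<lambda>\<rho>. - real (M+1) * (ln (t \<rho> / 6) / ln \<rho>))"
    unfolding hi_def by (rule ext) (simp add: algebra_simps minus_divide_left)
  have "(lo \<longlongrightarrow> - (real M * ln 2) * 0 - real (M+1) * (2*r - 1)) at_top"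
    unfolding lo_eq by (intro tendsto_intros L(2) L(4))
  then have lo_lim: "(lo \<longlongrightarrow> real (M + 1) * (1 - 2 * r)) at_top" by (simp add: algebra_simps)
  have "(hi \<longlongrightarrow> - real (M+1) * (2*r - 1)) at_top"
    unfolding hi_eq by (intro tendsto_intros L(1))
  then have hi_lim: "(hi \<longlongrightarrow> real (M + 1) * (1 - 2 * r)) at_top" by (simp add: algebra_simps)
  show ?thesis
    by (rule tendsto_sandwich[OF _ _ lo_lim hi_lim]) (use ev in \<open>auto elim: eventually_mono\<close>)
qed

end
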